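(* For every $y_0\in Y$ and every $\theta\ge0$, $$\bar d^*(\theta,y_0)=d^*(\theta,y_0)\le k^*(\theta,y_0).$$
   Context: Let $Y\subset\mathbb{R}^m$ be nonempty compact, $U_0$ a compact metric space, $U(\cdot):Y\rightsquigarrow U_0$ upper semicontinuous and compact-valued, and $f:\mathbb{R}^m\times U_0\to\mathbb{R}^m$, $k:\mathbb{R}^m\times U_0\to\mathbb{R}$ continuous. Put $A(y):=\{u\in U(y): f(y,u)\in Y\}$ and $G:=\{(y,u):y\in Y,\ u\in A(y)\}$. Standing assumption: $A(y)\ne\emptyset$ for all $y\in Y$. Measure spaces: - $\mathcal P(G)$ denotes the Borel probability measures on $G$ and $\mathcal M_+(G)$ the finite nonnegative Borel measures on $G$. - $W:=\{\gamma\in\mathcal P(G):\int_G(\varphi(f(y,u))-\varphi(y))\,d\gamma=0\ \forall\varphi\in C(Y)\}$. - $\Omega(y_0)$ is the set of $(\gamma,\xi)\in\mathcal P(G)\times\mathcal M_+(G)$ with $\gamma\in W$ and $\int_G(\varphi(y_0)-\varphi(y))\,\gamma(dy,du)+\int_G(\varphi(f(y,u))-\varphi(y))\,\xi(dy,du)=0$ for all $\varphi\in C(Y)$. Perturbed problems, for $\theta\ge0$: - $k^*(\theta,y_0):=\inf_{(\gamma,\xi)\in\Omega(y_0)}\left\{\int_Gk(y,u)\,\gamma(dy,du)+\theta\,\xi(G)\right\}$. - $d^*(\theta,y_0):=\sup\mu$, over triples $(\mu,\psi,\eta)\in\mathbb{R}\times C(Y)\times C(Y)$ such that for all $(y,u)\in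 G$: $$k(y,u)+\psi(y_0)-\psi(y)+\eta(f(y,u))-\eta(y)-\mu\ge0,\qquad\psi(f(y,u))-\psi(y)\ge-\theta.$$ - $\bar d^*(\theta,y_0):=\sup\psi(y_0)$, over pairs $(\psi,\eta)\in C(Y)\times C(Y)$ such that for all $(y,u)\in G$: $$k(y,u)-\psi(y)+\eta(f(y,u))-\eta(y)\ge0,\qquad\psi(f(y,u))-\psi(y)\ge-\theta.$$ *)

theory Defs
  imports "HOL-Probability.Probability"
begin

definition usc_setvalued_on :: "'a::metric_space set \<Rightarrow> ('a \<Rightarrow> 'b::topological_space set) \<Rightarrow> bool" where
  "usc_setvalued_on Y U \<longleftrightarrow>
     (\<forall>y\<in>Y. \<forall>V. open V \<and> U y \<subseteq> V \<longrightarrow>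
        (\<exists>\<delta>>0. \<forall>y'\<in>Y. dist y' y < \<delta> \<longrightarrow> U y' \<subseteq> V))"

definition Aset :: "'a set \<Rightarrow> ('a \<Rightarrow> 'b set) \<Rightarrow> ('a \<times> 'b \<Rightarrow> 'a) \<Rightarrow> 'a \<Rightarrow> 'b set" where
  "Aset Y U f y = {u \<in> U y. f (y, u) \<in> Y}"

definition Gset :: "'a set \<Rightarrow> ('a \<Rightarrow> 'b set) \<Rightarrow> ('a \<times> 'b \<Rightarrow> 'a) \<Rightarrow> ('a \<times> 'b) set" where
  "Gset Y U f = {(y, u). y \<in> Y \<and> u \<in> Aset Y U f y}"

definition borel_prob_on :: "('c::topological_space) set \<Rightarrow> 'c measure \<Rightarrow> bool" where
  "borel_prob_on S M \<longleftrightarrow> sets M = sets (restrict_space borel S) \<and> prob_space M"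

definition borel_finite_on :: "('c::topological_space) set \<Rightarrow> 'c measure \<Rightarrow> bool" where
  "borel_finite_on S M \<longleftrightarrow> sets M = sets (restrict_space borel S) \<and> finite_measure M"

definition Wset :: "('a::euclidean_space) set \<Rightarrow> ('a \<Rightarrow> 'b::metric_space set) \<Rightarrow> ('a \<times> 'b \<Rightarrow> 'a)
    \<Rightarrow> ('a \<times> 'b) measure set" where
  "Wset Y U f = {\<gamma>. borel_prob_on (Gset Y U f) \<gamma> \<and>
      (\<forall>\<phi>::'a \<Rightarrow> real. continuous_on Y \<phi> \<longrightarrow>
         integral\<^sup>L \<gamma> (\<lambda>(y, u). \<phi> (f (y, u)) - \<phi> y) = 0)}"

definition Omega :: "('a::euclidean_space) set \<Rightarrow> ('a \<Rightarrow> 'b::metric_space set) \<Rightarrow> ('a \<times> 'b \<Rightarrow> 'a)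
    \<Rightarrow> 'a \<Rightarrow> (('a \<times> 'b) measure \<times> ('a \<times> 'b) measure) set" where
  "Omega Y U f y0 = {(\<gamma>, \<xi>). \<gamma> \<in> Wset Y U f \<and> borel_finite_on (Gset Y U f) \<xi> \<and>
      (\<forall>\<phi>::'a \<Rightarrow> real. continuous_on Y \<phi> \<longrightarrow>
         integral\<^sup>L \<gamma> (\<lambda>(y, u). \<phi> y0 - \<phi> y)
         + integral\<^sup>L \<xi> (\<lambda>(y, u). \<phi> (f (y, u)) - \<phi> y) = 0)}"

text \<open>Values are taken in the extended reals (inf of the empty set = +\<infinity>, etc.).\<close>
definition kstar :: "('a::euclidean_space) set \<Rightarrow> ('a \<Rightarrow> 'b::metric_space set) \<Rightarrow> ('a \<times> 'b \<Rightarrow> 'a)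
    \<Rightarrow> ('a \<times> 'b \<Rightarrow> real) \<Rightarrow> real \<Rightarrow> 'a \<Rightarrow> ereal" where
  "kstar Y U f k \<theta> y0 = (INF p \<in> Omega Y U f y0.
      ereal (integral\<^sup>L (fst p) k + \<theta> * measure (snd p) (Gset Y U f)))"

definition dstar :: "('a::euclidean_space) set \<Rightarrow> ('a \<Rightarrow> 'b::metric_space set) \<Rightarrow> ('a \<times> 'b \<Rightarrow> 'a)
    \<Rightarrow> ('a \<times> 'b \<Rightarrow> real) \<Rightarrow> real \<Rightarrow> 'a \<Rightarrow> ereal" where
  "dstar Y U f k \<theta> y0 = Sup {ereal \<mu> | \<mu>. \<exists>\<psi> \<eta> :: 'a \<Rightarrow> real.
      continuous_on Y \<psi> \<and> continuous_on Y \<eta> \<and>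
      (\<forall>(y, u) \<in> Gset Y U f.
         k (y, u) + \<psi> y0 - \<psi> y + \<eta> (f (y, u)) - \<eta> y - \<mu> \<ge> 0 \<and>
         \<psi> (f (y, u)) - \<psi> y \<ge> - \<theta>)}"

definition dbarstar :: "('a::euclidean_space) set \<Rightarrow> ('a \<Rightarrow> 'b::metric_space set) \<Rightarrow> ('a \<times> 'b \<Rightarrow> 'a)
    \<Rightarrow> ('a \<times> 'b \<Rightarrow> real) \<Rightarrow> real \<Rightarrow> 'a \<Rightarrow> ereal" where
  "dbarstar Y U f k \<theta> y0 = Sup {ereal (\<psi> y0) | \<psi>. \<exists>\<eta> :: 'a \<Rightarrow> real.
      continuous_on Y \<psi> \<and> continuous_on Y \<eta> \<and>
      (\<forall>(y, u) \<in> Gset Y U f.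
         k (y, u) - \<psi> y + \<eta> (f (y, u)) - \<eta> y \<ge> 0 \<and>
         \<psi> (f (y, u)) - \<psi> y \<ge> - \<theta>)}"

end

theory Submission
  imports Defs
begin

lemma cont_meas:
  assumes "continuous_on G h" "sets M = sets (restrict_space borel G)"
  shows "h \<in> borel_measurable M"
  using borel_measurable_continuous_on_restrict[OF assms(1)] measurable_cong_sets[OF assms(2) refl]
  by blast

lemma cont_integrable:
  fixes h :: "'c::topological_space \<Rightarrow> real"
  assumes "finite_measure M" "sets M = sets (restrict_space borel G)" "continuous_on G h"
    "\<forall>x\<in>G. \<bar>h x\<bar> \<le> B"
  shows "integrable M h"
proof -
  have sp: "space M = G"
    using sets_eq_imp_space_eq[OF assms(2)] by (simp add: space_restrict_space)
  show ?thesis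
    using assms(4) sp
    by (intro finite_measure.integrable_const_bound[OF assms(1), where B=B])
       (auto intro: cont_meas[OF assms(3,2)])
qed

lemma cont_bound:
  fixes h :: "'c::topological_space \<Rightarrow> real"
  assumes "compact S" "continuous_on S h"
  shows "\<exists>B. \<forall>x\<in>S. \<bar>h x\<bar> \<le> B"
proof -
  have "bounded (h ` S)"
    using compact_imp_bounded compact_continuous_image assms by blast
  then show ?thesis unfolding bounded_real by auto
qed

theorem lemma5p3:
  fixes Y :: "'a::euclidean_space set"
    and U0 :: "'b::metric_space set"
    and U :: "'a \<Rightarrow> 'b set"
    and f :: "'a \<times> 'b \<Rightarrow> 'a"
    and k :: "'a \<times> 'b \<Rightarrow> real"
    and y0 :: 'a and \<theta> :: real
  assumes "compact Y" and "Y \<noteq> {}"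
    and "compact U0"
    and "\<forall>y\<in>Y. U y \<subseteq> U0 \<and> compact (U y)"
    and "usc_setvalued_on Y U"
    and "continuous_on (UNIV \<times> U0) f"
    and "continuous_on (UNIV \<times> U0) k"
    and "\<forall>y\<in>Y. Aset Y U f y \<noteq> {}"
    and "y0 \<in> Y" and "\<theta> \<ge> 0"
  shows "dbarstar Y U f k \<theta> y0 = dstar Y U f k \<theta> y0 \<and> dstar Y U f k \<theta> y0 \<le> kstar Y U f k \<theta> y0"
proof
  define G where "G = Gset Y U f"
  have GY: "G \<subseteq> Y \<times> U0" using assms(4) unfolding G_def Gset_def Aset_def by auto
  have fG: "\<And>x. x \<in> G \<Longrightarrow> f x \<in> Y" unfolding G_def Gset_def Aset_def by auto
  have fstG: "\<And>x. x \<in> G \<Longrightarrow> fst x \<in> Y" using GY by auto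
  have fcont: "continuous_on G f"
    using continuous_on_subset[OF assms(6)] GY by auto
  have kcont: "continuous_on G k"
    using continuous_on_subset[OF assms(7)] GY by auto
  have kc: "continuous_on (Y \<times> U0) k"
    by (rule continuous_on_subset[OF assms(7)]) auto
  obtain Bk where Bk: "\<forall>x\<in>Y \<times> U0. \<bar>k x\<bar> \<le> Bk"
    using cont_bound[OF compact_Times[OF assms(1,3)] kc] by blast
  have cf: "continuous_on G (\<lambda>x. \<phi> (f x))" if "continuous_on Y \<phi>" for \<phi> :: "'a \<Rightarrow> real"
    by (rule continuous_on_compose2[OF that fcont]) (use fG in auto)
  have cfst: "continuous_on G (\<lambda>x. \<phi> (fst x))" if "continuous_on Y \<phi>" for \<phi> :: "'a \<Rightarrow> real"
    by (rule continuous_on_compose2[OF that continuous_on_fst[OF continuous_on_id]]) (use fstG in auto)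
  have bf: "\<exists>B. \<forall>x\<in>G. \<bar>\<phi> (f x)\<bar> \<le> B \<and> \<bar>\<phi> (fst x)\<bar> \<le> B"
    if phic: "continuous_on Y \<phi>" for \<phi> :: "'a \<Rightarrow> real"
  proof -
    obtain B where "\<forall>y\<in>Y. \<bar>\<phi> y\<bar> \<le> B" using cont_bound[OF assms(1) phic] by blast
    then show ?thesis using fG fstG by blast
  qed
  show "dbarstar Y U f k \<theta> y0 = dstar Y U f k \<theta> y0"
    unfolding dbarstar_def dstar_def
  proof (rule arg_cong[where f=Sup], rule set_eqI, rule iffI)
    fix z assume "z \<in> {ereal (\<psi> y0) |\<psi>. \<exists>\<eta>. continuous_on Y \<psi> \<and> continuous_on Y \<eta> \<and>
             (\<forall>(y, u)\<in>Gset Y U f. 0 \<le> k (y, u) - \<psi> y + \<eta> (f (y, u)) - \<eta> y \<and> - \<theta> \<le> \<psi> (f (y, u)) - \<psi> y)}"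
    then obtain \<psi> \<eta> where z: "z = ereal (\<psi> y0)" "continuous_on Y \<psi>" "continuous_on Y \<eta>"
      "\<forall>(y, u)\<in>Gset Y U f. 0 \<le> k (y, u) - \<psi> y + \<eta> (f (y, u)) - \<eta> y \<and> - \<theta> \<le> \<psi> (f (y, u)) - \<psi> y"
      by blast
    show "z \<in> {ereal \<mu> |\<mu>. \<exists>\<psi> \<eta>. continuous_on Y \<psi> \<and> continuous_on Y \<eta> \<and>
             (\<forall>(y, u)\<in>Gset Y U f. 0 \<le> k (y, u) + \<psi> y0 - \<psi> y + \<eta> (f (y, u)) - \<eta> y - \<mu> \<and> - \<theta> \<le> \<psi> (f (y, u)) - \<psi> y)}"
    proof -
      have "\<forall>(y, u)\<in>Gset Y U f. 0 \<le> k (y, u) + \<psi> y0 - \<psi> y + \<eta> (f (y, u)) - \<eta> y - \<psi> y0 \<and> - \<theta> \<le> \<psi> (f (y, u)) - \<psi> y"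
        using z(4) by (force simp: split_beta)
      then show ?thesis using z(1,2,3) by blast
    qed
  next
    fix z assume "z \<in> {ereal \<mu> |\<mu>. \<exists>\<psi> \<eta>. continuous_on Y \<psi> \<and> continuous_on Y \<eta> \<and>
             (\<forall>(y, u)\<in>Gset Y U f. 0 \<le> k (y, u) + \<psi> y0 - \<psi> y + \<eta> (f (y, u)) - \<eta> y - \<mu> \<and> - \<theta> \<le> \<psi> (f (y, u)) - \<psi> y)}"
    then obtain \<mu> \<psi> \<eta> where z: "z = ereal \<mu>" "continuous_on Y \<psi>" "continuous_on Y \<eta>"
      "\<forall>(y, u)\<in>Gset Y U f. 0 \<le> k (y, u) + \<psi> y0 - \<psi> y + \<eta> (f (y, u)) - \<eta> y - \<mu> \<and> - \<theta> \<le> \<psi> (f (y, u)) - \<psi> y"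
      by blast
    define \<psi>' where "\<psi>' = (\<lambda>y. \<psi> y - \<psi> y0 + \<mu>)"
    have "continuous_on Y \<psi>'" unfolding \<psi>'_def using z(2) by (intro continuous_intros)
    moreover have "\<forall>(y, u)\<in>Gset Y U f. 0 \<le> k (y, u) - \<psi>' y + \<eta> (f (y, u)) - \<eta> y \<and> - \<theta> \<le> \<psi>' (f (y, u)) - \<psi>' y"
      using z(4) unfolding \<psi>'_def by (force simp: split_beta)
    moreover have "z = ereal (\<psi>' y0)" using z(1) unfolding \<psi>'_def by simp
    ultimately show "z \<in> {ereal (\<psi> y0) |\<psi>. \<exists>\<eta>. continuous_on Y \<psi> \<and> continuous_on Y \<eta> \<and>
             (\<forall>(y, u)\<in>Gset Y U f. 0 \<le> k (y, u) - \<psi> y + \<eta> (f (y, u)) - \<eta> y \<and> - \<theta> \<le> \<psi> (f (y, u)) - \<psi> y)}"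
      using z(3) by blast
  qed
  show "dstar Y U f k \<theta> y0 \<le> kstar Y U f k \<theta> y0"
    unfolding dstar_def kstar_def
  proof (rule Sup_least, rule INF_greatest)
    fix z p assume "z \<in> {ereal \<mu> |\<mu>. \<exists>\<psi> \<eta>. continuous_on Y \<psi> \<and> continuous_on Y \<eta> \<and>
             (\<forall>(y, u)\<in>Gset Y U f. 0 \<le> k (y, u) + \<psi> y0 - \<psi> y + \<eta> (f (y, u)) - \<eta> y - \<mu> \<and> - \<theta> \<le> \<psi> (f (y, u)) - \<psi> y)}"
    then obtain \<mu> \<psi> \<eta> where z: "z = ereal \<mu>" "continuous_on Y \<psi>" "continuous_on Y \<eta>"
      "\<forall>(y, u)\<in>G. 0 \<le> k (y, u) + \<psi> y0 - \<psi> y + \<eta> (f (y, u)) - \<eta> y - \<mu> \<and> - \<theta> \<le> \<psi> (f (y, u)) - \<psi> y"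
      unfolding G_def by blast
    assume "p \<in> Omega Y U f y0"
    then obtain \<gamma> \<xi> where p: "p = (\<gamma>, \<xi>)" "\<gamma> \<in> Wset Y U f" "borel_finite_on G \<xi>"
      "\<forall>\<phi>::'a \<Rightarrow> real. continuous_on Y \<phi> \<longrightarrow>
         integral\<^sup>L \<gamma> (\<lambda>(y, u). \<phi> y0 - \<phi> y)
         + integral\<^sup>L \<xi> (\<lambda>(y, u). \<phi> (f (y, u)) - \<phi> y) = 0"
      unfolding Omega_def G_def by blast
    have gs: "sets \<gamma> = sets (restrict_space borel G)" and gp: "prob_space \<gamma>"
      and gW: "\<forall>\<phi>::'a \<Rightarrow> real. continuous_on Y \<phi> \<longrightarrow>
         integral\<^sup>L \<gamma> (\<lambda>(y, u). \<phi> (f (y, u)) - \<phi> y) = 0"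
      using p(2) unfolding Wset_def borel_prob_on_def G_def by auto
    have xs: "sets \<xi> = sets (restrict_space borel G)" and xf: "finite_measure \<xi>"
      using p(3) unfolding borel_finite_on_def by auto
    have gf: "finite_measure \<gamma>" using gp by (simp add: prob_space_def)
    have gsp: "space \<gamma> = G" using sets_eq_imp_space_eq[OF gs] by (simp add: space_restrict_space)
    have xsp: "space \<xi> = G" using sets_eq_imp_space_eq[OF xs] by (simp add: space_restrict_space)
    have eta0: "integral\<^sup>L \<gamma> (\<lambda>(y, u). \<eta> (f (y, u)) - \<eta> y) = 0" using gW z(3) by blast
    have psiO: "integral\<^sup>L \<gamma> (\<lambda>(y, u). \<psi> y0 - \<psi> y)
         + integral\<^sup>L \<xi> (\<lambda>(y, u). \<psi> (f (y, u)) - \<psi> y) = 0" using p(4) z(2) by blast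
    obtain B1 where B1: "\<forall>x\<in>G. \<bar>\<psi> (f x)\<bar> \<le> B1 \<and> \<bar>\<psi> (fst x)\<bar> \<le> B1" using bf[OF z(2)] by blast
    obtain B2 where B2: "\<forall>x\<in>G. \<bar>\<eta> (f x)\<bar> \<le> B2 \<and> \<bar>\<eta> (fst x)\<bar> \<le> B2" using bf[OF z(3)] by blast
    have c1: "continuous_on G (\<lambda>(y, u). \<psi> y0 - \<psi> y)"
      unfolding split_beta using cfst[OF z(2)] by (intro continuous_intros)
    have c2: "continuous_on G (\<lambda>(y, u). \<eta> (f (y, u)) - \<eta> y)"
      unfolding split_beta using cfst[OF z(3)] cf[OF z(3)] by (intro continuous_intros) auto
    have c3: "continuous_on G (\<lambda>(y, u). \<psi> (f (y, u)) - \<psi> y)"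
      unfolding split_beta using cfst[OF z(2)] cf[OF z(2)] by (intro continuous_intros) auto
    have i1: "integrable \<gamma> (\<lambda>(y, u). \<psi> y0 - \<psi> y)"
      apply (rule cont_integrable[OF gf gs c1, where B="\<bar>\<psi> y0\<bar> + B1"])
      using B1 by (auto simp: split_beta)
    have i2: "integrable \<gamma> (\<lambda>(y, u). \<eta> (f (y, u)) - \<eta> y)"
      apply (rule cont_integrable[OF gf gs c2, where B="B2 + B2"])
      using B2 by (auto simp: split_beta abs_le_iff)
    have i3: "integrable \<xi> (\<lambda>(y, u). \<psi> (f (y, u)) - \<psi> y)"
      apply (rule cont_integrable[OF xf xs c3, where B="B1 + B1"])
      using B1 by (auto simp: split_beta abs_le_iff)
    have ik: "integrable \<gamma> k"
      apply (rule cont_integrable[OF gf gs kcont, where B=Bk])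
      using Bk GY by auto
    have ic: "integrable \<gamma> (\<lambda>_. c)" for c :: real
      using gf finite_measure.integrable_const by blast
    have icx: "integrable \<xi> (\<lambda>_. c)" for c :: real
      using xf finite_measure.integrable_const by blast
    have "integral\<^sup>L \<gamma> (\<lambda>x. \<mu> - (\<lambda>(y, u). \<psi> y0 - \<psi> y) x - (\<lambda>(y, u). \<eta> (f (y, u)) - \<eta> y) x)
          \<le> integral\<^sup>L \<gamma> k"
      apply (rule integral_mono)
      using ic i1 i2 ik apply (intro Bochner_Integration.integrable_diff; auto)
      using ik apply simp
      using z(4) gsp by (auto simp: split_beta)
    also have "integral\<^sup>L \<gamma> (\<lambda>x. \<mu> - (\<lambda>(y, u). \<psi> y0 - \<psi> y) x - (\<lambda>(y, u). \<eta> (f (y, u)) - \<eta> y) x)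
       = \<mu> - integral\<^sup>L \<gamma> (\<lambda>(y, u). \<psi> y0 - \<psi> y) - integral\<^sup>L \<gamma> (\<lambda>(y, u). \<eta> (f (y, u)) - \<eta> y)"
      using ic i1 i2 gp by (simp add: Bochner_Integration.integral_diff prob_space.prob_space)
    finally have A: "\<mu> + integral\<^sup>L \<xi> (\<lambda>(y, u). \<psi> (f (y, u)) - \<psi> y) \<le> integral\<^sup>L \<gamma> k"
      using eta0 psiO by linarith
    have "integral\<^sup>L \<xi> (\<lambda>_. - \<theta>) \<le> integral\<^sup>L \<xi> (\<lambda>(y, u). \<psi> (f (y, u)) - \<psi> y)"
      apply (rule integral_mono[OF icx i3])
      using z(4) xsp by (auto simp: split_beta)
    moreover have "integral\<^sup>L \<xi> (\<lambda>_. - \<theta>) = - \<theta> * measure \<xi> G"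
      using xsp by simp
    ultimately have "\<mu> \<le> integral\<^sup>L \<gamma> k + \<theta> * measure \<xi> G" using A by linarith
    then show "z \<le> ereal (integral\<^sup>L (fst p) k + \<theta> * measure (snd p) (Gset Y U f))"
      using z(1) p(1) unfolding G_def by simp
  qed
qed

end
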